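(* Let $(X,\|\cdot\|_X)$ and $(Y,\|\cdot\|_Y)$ be two-dimensional real normed spaces and $\tau:S_X\to S_Y$ a surjective isometry. Then $S_X$ is piecewise $C^1$-differentiable if and only if $S_Y$ is. Moreover, if $S_X$ is piecewise $C^1$-differentiable, then for every $x\in S_X$, $\|\cdot\|_X$ is differentiable at $x$ if and only if $\|\cdot\|_Y$ is differentiable at $\tau(x)$.
   Context: $S_X$ denotes the unit sphere. $S_X$ is called piecewise $C^1$-differentiable if the norm $\|\cdot\|_X$ fails to be differentiable at only finitely many points of $S_X$ (for a norm in finite dimension, differentiability at a point is equivalent to $C^1$-differentiability near it). *)

theory Defs
  imports "HOL-Analysis.Analysis"
begin

text \<open>The unit sphere S_X of a real normed space is sphere 0 1.
  S_X is piecewise C^1-differentiable iff the norm fails to be (Frechet)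
  differentiable at only finitely many points of S_X.\<close>

definition piecewise_C1_sphere :: "'a::real_normed_vector itself \<Rightarrow> bool" where
  "piecewise_C1_sphere _ \<longleftrightarrow>
     finite {x \<in> sphere (0::'a) 1. \<not> ((norm :: 'a \<Rightarrow> real) differentiable (at x))}"

end

theory Submission imports Defs begin

lemma coords2:
  assumes "dim (UNIV :: 'a::real_normed_vector set) = 2"
  obtains L :: "real \<times> real \<Rightarrow> 'a::real_normed_vector" where
    "\<And>p q. L (p + q) = L p + L q" "\<And>r p. L (r *\<^sub>R p) = r *\<^sub>R L p" "bij L"
proof -
  obtain B :: "'a set" where B0: "B \<subseteq> UNIV" "independent B" "UNIV \<subseteq> span B" "card B = dim (UNIV :: 'a set)"
    by (rule basis_exists)
  then have B: "independent B" "UNIV \<subseteq> span B" "card B = 2" using assms by auto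
  then obtain b1 b2 where b: "B = {b1, b2}" "b1 \<noteq> b2" by (auto simp: card_2_iff)
  have ind: "independent {b2}" "b1 \<notin> span {b2}"
    using B(1) b by (auto simp: independent_insert)
  have b2nz: "b2 \<noteq> 0" using ind(1) by (simp add: independent_insert)
  define L where "L = (\<lambda>p::real\<times>real. fst p *\<^sub>R b1 + snd p *\<^sub>R b2)"
  have add: "L (p + q) = L p + L q" for p q
    by (simp add: L_def algebra_simps)
  have sc: "L (r *\<^sub>R p) = r *\<^sub>R L p" for r p
    by (simp add: L_def algebra_simps)
  have zero: "p = 0" if "L p = 0" for p
  proof -
    obtain s t where p: "p = (s, t)" by force
    have e: "s *\<^sub>R b1 + t *\<^sub>R b2 = 0" using that p by (simp add: L_def)
    have "s = 0"
    proof (rule ccontr)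
      assume "s \<noteq> 0"
      have e2: "s *\<^sub>R b1 = (- t) *\<^sub>R b2" using e by (simp add: eq_neg_iff_add_eq_0)
      have "b1 = (1/s) *\<^sub>R (s *\<^sub>R b1)" using \<open>s \<noteq> 0\<close> by simp
      also have "\<dots> = (- t / s) *\<^sub>R b2" unfolding e2 by simp
      finally have "b1 = (- t / s) *\<^sub>R b2" .
      then have "b1 \<in> span {b2}" by (metis span_base span_scale singletonI)
      with ind show False by blast
    qed
    then have "t = 0" using e b2nz by simp
    then show ?thesis using \<open>s = 0\<close> p by (simp add: zero_prod_def)
  qed
  have inj: "inj L"
  proof (rule injI)
    fix p q assume "L p = L q"
    then have "L (p - q) = 0"
      using add[of "p - q" q] by simp
    then show "p = q" using zero by fastforce
  qed
  have surj: "surj L"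
  proof -
    { fix x :: 'a
      have "x \<in> span {b1, b2}" using B b by blast
      then obtain k where "x - k *\<^sub>R b1 \<in> span {b2}" using span_breakdown_eq by blast
      then obtain t where "x - k *\<^sub>R b1 = t *\<^sub>R b2" by (auto simp: span_singleton)
      then have "x = L (k, t)" by (simp add: L_def algebra_simps)
      then have "x \<in> range L" by blast }
    then show ?thesis by blast
  qed
  show ?thesis using that[of L] add sc inj surj by (simp add: bij_def)
qed

lemma norming:
  assumes dim: "dim (UNIV :: 'a::real_normed_vector set) = 2" and m: "norm (m::'a) = 1"
  obtains f :: "'a::real_normed_vector \<Rightarrow> real" where "bounded_linear f" "f m = 1" "\<And>v. \<bar>f v\<bar> \<le> norm v"
proof -
  obtain L :: "real \<times> real \<Rightarrow> 'a" where add: "\<And>p q. L (p + q) = L p + L q"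
    and sc: "\<And>r p. L (r *\<^sub>R p) = r *\<^sub>R L p" and bij: "bij L"
    using coords2[OF dim] by blast
  define Li where "Li = inv L"
  have LLi: "L (Li x) = x" for x using bij by (simp add: Li_def bij_is_surj surj_f_inv_f)
  have LiL: "Li (L p) = p" for p using bij by (simp add: Li_def bij_is_inj)
  have L0: "L 0 = 0" using sc[of 0 0] by simp
  have Liadd: "Li (x + y) = Li x + Li y" for x y
    by (metis LLi LiL add)
  have Lisc: "Li (r *\<^sub>R x) = r *\<^sub>R Li x" for r x
    by (metis LLi LiL sc)
  have Lidiff: "Li (x - y) = Li x - Li y" for x y
    by (metis Liadd add_diff_cancel diff_add_cancel)
  define S where "S = {v. norm (L v + m) < 1}"
  have cS: "convex S"
    unfolding convex_def S_def
  proof (intro ballI allI impI, simp)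
    fix x y :: "real \<times> real" and u v :: real
    assume xy: "norm (L x + m) < 1" "norm (L y + m) < 1" and uv: "0 \<le> u" "0 \<le> v" "u + v = 1"
    have "L (u *\<^sub>R x + v *\<^sub>R y) + m = u *\<^sub>R (L x + m) + v *\<^sub>R (L y + m)"
    proof -
      have m': "u *\<^sub>R m + v *\<^sub>R m = m" using uv(3) by (metis scaleR_add_left scaleR_one)
      have "u *\<^sub>R (L x + m) + v *\<^sub>R (L y + m) = u *\<^sub>R L x + v *\<^sub>R L y + (u *\<^sub>R m + v *\<^sub>R m)"
        by (simp add: algebra_simps)
      also have "\<dots> = L (u *\<^sub>R x + v *\<^sub>R y) + m" by (simp only: m' add sc)
      finally show ?thesis by simp
    qed
    then have "norm (L (u *\<^sub>R x + v *\<^sub>R y) + m) \<le> u * norm (L x + m) + v * norm (L y + m)"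
      using uv by (metis norm_triangle_ineq norm_scaleR abs_of_nonneg)
    also have "\<dots> < 1"
    proof (cases "u = 0")
      case True then show ?thesis using uv xy by simp
    next
      case False
      then have "u * norm (L x + m) < u" using uv xy by simp
      moreover have "v * norm (L y + m) \<le> v" using uv xy by (simp add: mult_left_le)
      ultimately show ?thesis using uv by linarith
    qed
    finally show "norm (L (u *\<^sub>R x + v *\<^sub>R y) + m) < 1" .
  qed
  have 0: "0 \<notin> S" using m L0 by (simp add: S_def)
  obtain a where a: "a \<noteq> 0" "\<And>v. v \<in> S \<Longrightarrow> 0 \<le> a \<bullet> v"
    using separating_hyperplane_set_0[OF cS 0] by blast
  define g where "g x = - (a \<bullet> Li x)" for x
  have gadd: "g (x + y) = g x + g y" for x y by (simp add: g_def Liadd inner_add_right)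
  have gsc: "g (r *\<^sub>R x) = r * g x" for r x by (simp add: g_def Lisc)
  have key: "g p \<le> g m" if "norm p < 1" for p
  proof -
    have "Li (p - m) \<in> S" using that by (simp add: S_def LLi)
    then have "0 \<le> a \<bullet> Li (p - m)" by (rule a(2))
    then show ?thesis by (simp add: g_def Lidiff inner_diff_right)
  qed
  define x0 where "x0 = L (- a)"
  have gx0: "g x0 = a \<bullet> a" by (simp add: g_def x0_def LiL)
  have gx0p: "g x0 > 0" using a(1) gx0 by simp
  have x0nz: "x0 \<noteq> 0"
  proof
    assume "x0 = 0"
    then have "g x0 = 0" using gsc[of 0 0] by simp
    with gx0p show False by simp
  qed
  define p where "p = (1 / (2 * norm x0)) *\<^sub>R x0"
  have "norm p < 1" using x0nz by (simp add: p_def)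
  moreover have "g p > 0" using x0nz gx0p by (simp add: p_def gsc)
  ultimately have gm: "g m > 0" using key by fastforce
  define f where "f x = g x / g m" for x
  have fadd: "f (x + y) = f x + f y" for x y by (simp add: f_def gadd add_divide_distrib)
  have fsc: "f (r *\<^sub>R x) = r * f x" for r x by (simp add: f_def gsc)
  have fkey: "f q \<le> 1" if "norm q < 1" for q using key[OF that] gm by (simp add: f_def)
  have bnd: "\<bar>f v\<bar> \<le> norm v" for v
  proof (rule ccontr)
    assume H: "\<not> \<bar>f v\<bar> \<le> norm v"
    define c where "c = 2 / (norm v + \<bar>f v\<bar>)"
    have H': "norm v < \<bar>f v\<bar>" using H by simp
    have pos: "norm v + \<bar>f v\<bar> > 0" using H' norm_ge_zero[of v] by linarith
    have c: "c > 0" using pos by (simp add: c_def)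
    have n1: "c * norm v < 1" using H pos by (simp add: c_def field_simps)
    have g1: "c * \<bar>f v\<bar> > 1" using H pos by (simp add: c_def field_simps)
    show False
    proof (cases "f v \<ge> 0")
      case True
      have "norm (c *\<^sub>R v) < 1" using n1 c by simp
      then have "f (c *\<^sub>R v) \<le> 1" by (rule fkey)
      then show False using g1 True by (simp add: fsc)
    next
      case False
      have "norm ((- c) *\<^sub>R v) < 1" using n1 c by simp
      then have "f ((- c) *\<^sub>R v) \<le> 1" by (rule fkey)
      then have "- c * f v \<le> 1" by (simp only: fsc)
      then show False using g1 False by simp
    qed
  qed
  have "bounded_linear f"
    by (rule bounded_linear_intro[where K=1]) (auto simp: fadd fsc bnd)
  moreover have "f m = 1" using gm by (simp add: f_def)
  ultimately show ?thesis using that bnd by blast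
qed

definition crit :: "'a::real_normed_vector \<Rightarrow> bool" where
  "crit x \<longleftrightarrow> (\<exists>w\<in>sphere 0 1. dist x w = 2 \<and> (\<forall>e>0. \<exists>d>0. \<forall>y\<in>sphere 0 1. \<forall>z\<in>sphere 0 1.
      dist y x < d \<longrightarrow> dist z w < d \<longrightarrow> 2 - dist y z \<le> e * (dist y x + dist z w)))"

lemma aux_lin: "- (A::real) \<le> N - 1 - Q \<Longrightarrow> A = B / 2 \<Longrightarrow> Q = 1/2 * (a - b) \<Longrightarrow> 2 - 2 * N \<le> - (a - b) + B"
  by (simp add: field_simps)

lemma aux_lin3: fixes p r e nu nv nuv :: real
  shows "\<bar>p\<bar> \<le> e / 2 * nu \<Longrightarrow> \<bar>r\<bar> \<le> e / 2 * nv \<Longrightarrow> e * nuv \<le> e * (nu + nv) \<Longrightarrow> - (p - r) + e / 2 * nuv \<le> e * (nu + nv)"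
  by (simp add: abs_le_iff field_simps)

lemma diff_imp_crit:
  fixes x :: "'a::real_normed_vector"
  assumes x: "norm x = 1" and dif: "norm differentiable (at x)"
  shows "crit x"
proof -
  obtain D where hd: "(norm has_derivative D) (at x)" using dif by (auto simp: differentiable_def)
  then have bl: "bounded_linear D" and ed: "\<And>e. e > 0 \<Longrightarrow> \<exists>d>0. \<forall>q. norm (q - x) < d \<longrightarrow>
      norm (norm q - norm x - D (q - x)) \<le> e * norm (q - x)"
    by (auto simp: has_derivative_at_alt)
  interpret D: bounded_linear D by (rule bl)
  show ?thesis unfolding crit_def
  proof (intro bexI[of _ "- x"] conjI allI impI)
    show "- x \<in> sphere 0 1" using x by simp
    show "dist x (- x) = 2" using x by (simp add: dist_norm flip: scaleR_2)
    fix e :: real assume e: "e > 0"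
    obtain d where d: "d > 0" and hdd: "\<And>q. norm (q - x) < d \<Longrightarrow>
      \<bar>norm q - 1 - D (q - x)\<bar> \<le> e / 2 * norm (q - x)"
      using ed[of "e/2"] e x by auto
    show "\<exists>d>0. \<forall>y\<in>sphere 0 1. \<forall>z\<in>sphere 0 1. dist y x < d \<longrightarrow> dist z (- x) < d \<longrightarrow>
        2 - dist y z \<le> e * (dist y x + dist z (- x))"
    proof (intro exI[of _ d] conjI ballI impI)
      show "d > 0" by (rule d)
      fix y z :: 'a assume y: "y \<in> sphere 0 1" and z: "z \<in> sphere 0 1"
        and dy: "dist y x < d" and dz: "dist z (- x) < d"
      define u where "u = y - x"
      define v where "v = z + x"
      have nu: "norm u < d" using dy by (simp add: u_def dist_norm)
      have nv: "norm v < d" using dz by (simp add: v_def dist_norm)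
      have i: "\<bar>D u\<bar> \<le> e / 2 * norm u" using hdd[of y] nu y by (simp add: u_def)
      have "\<bar>norm (- z) - 1 - D (- z - x)\<bar> \<le> e / 2 * norm (- z - x)"
        using hdd[of "- z"] nv by (simp add: v_def norm_minus_commute add.commute)
      moreover have "- z - x = - v" by (simp add: v_def)
      ultimately have ii: "\<bar>D v\<bar> \<le> e / 2 * norm v" using z by (simp add: D.neg)
      define q where "q = x + (1/2) *\<^sub>R (u - v)"
      have nuv: "norm (u - v) \<le> norm u + norm v" by (rule norm_triangle_ineq4)
      have "norm (q - x) < d" using nu nv nuv by (simp add: q_def)
      then have iii: "\<bar>norm q - 1 - D (q - x)\<bar> \<le> e / 2 * norm (q - x)" by (rule hdd)
      have Dq: "D (q - x) = (1/2) * (D u - D v)" by (simp add: q_def D.scaleR D.diff)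
      have nq: "norm (q - x) = (1/2) * norm (u - v)" by (simp add: q_def)
      have yz: "y - z = 2 *\<^sub>R q" by (simp add: q_def u_def v_def algebra_simps scaleR_2)
      have dyz: "dist y z = 2 * norm q" by (simp add: dist_norm yz)
      have h: "- (e / 2 * norm (q - x)) \<le> norm q - 1 - D (q - x)"
        using iii by (simp only: abs_le_iff) linarith
      have h2: "e / 2 * norm (q - x) = e / 2 * norm (u - v) / 2" by (simp add: nq)
      have "2 - dist y z \<le> - (D u - D v) + e / 2 * norm (u - v)"
        unfolding dyz by (rule aux_lin[OF h h2 Dq])
      also have "\<dots> \<le> e * (norm u + norm v)"
        by (rule aux_lin3[OF i ii mult_left_mono[OF nuv]]) (use e in simp)
      finally show "2 - dist y z \<le> e * (dist y x + dist z (- x))"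
        by (simp add: dist_norm u_def v_def)
    qed
  qed
qed

lemma crit_imp_diff:
  fixes x :: "'a::real_normed_vector"
  assumes dim: "dim (UNIV :: 'a set) = 2" and x: "norm x = 1" and cr: "crit x"
  shows "norm differentiable (at x)"
proof -
  obtain w where w: "norm w = 1" and dxw: "dist x w = 2" and crw: "\<And>e. e > 0 \<Longrightarrow> \<exists>d>0. \<forall>y\<in>sphere 0 1. \<forall>z\<in>sphere 0 1.
      dist y x < d \<longrightarrow> dist z w < d \<longrightarrow> 2 - dist y z \<le> e * (dist y x + dist z w)"
    using cr unfolding crit_def by auto
  define m where "m = (1/2) *\<^sub>R (x - w)"
  have nm: "norm m = 1" using dxw by (simp add: m_def dist_norm)
  obtain f where bl: "bounded_linear f" and fm: "f m = 1" and fb: "\<And>v. \<bar>f v\<bar> \<le> norm v"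
    using norming[OF dim nm] by blast
  interpret f: bounded_linear f by (rule bl)
  have "f m = (1/2) * (f x - f w)" by (simp add: m_def f.scaleR f.diff)
  then have fxw: "f x - f w = 2" using fm by simp
  have "f x \<le> 1" "- f w \<le> 1" using fb[of x] fb[of w] x w by (simp_all add: abs_le_iff)
  then have fx: "f x = 1" using fxw by linarith
  have two_m: "2 *\<^sub>R m = x - w" by (simp add: m_def)
  have step1: "\<exists>d>0. \<forall>y. norm y = 1 \<longrightarrow> norm (y - x) < d \<longrightarrow> 1 - f y \<le> e * norm (y - x)"
    if e: "e > 0" for e
  proof -
    obtain d0 where d0: "d0 > 0" and hd0: "\<forall>y\<in>sphere 0 1. \<forall>z\<in>sphere 0 1.
      dist y x < d0 \<longrightarrow> dist z w < d0 \<longrightarrow> 2 - dist y z \<le> e / 10 * (dist y x + dist z w)"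
      using crw[of "e/10"] e by auto
    show ?thesis
    proof (intro exI[of _ "min (1/2) (d0/4)"] conjI allI impI)
      show "min (1/2) (d0/4) > 0" using d0 by simp
      fix y :: 'a assume y: "norm y = 1" and dy: "norm (y - x) < min (1/2) (d0/4)"
      define \<delta> where "\<delta> = norm (y - x)"
      have \<delta>: "\<delta> < 1/2" "\<delta> < d0/4" "\<delta> \<ge> 0" using dy by (auto simp: \<delta>_def)
      define n where "n = norm (y - 2 *\<^sub>R m)"
      have ym: "y - 2 *\<^sub>R m = (y - x) + w" by (simp add: two_m)
      have nup: "n \<le> \<delta> + 1" using norm_triangle_ineq[of "y - x" w] w by (simp add: n_def ym \<delta>_def)
      have "f (y - 2 *\<^sub>R m) = f y - 2" by (simp add: f.diff f.scaleR fm)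
      then have fy: "1 - f y \<le> n - 1" using fb[of "y - 2 *\<^sub>R m"] by (simp add: n_def abs_le_iff)
      show "1 - f y \<le> e * norm (y - x)"
      proof (cases "n \<le> 1")
        case True then show ?thesis using fy e \<delta> by (simp add: \<delta>_def[symmetric]) (smt (verit) mult_nonneg_nonneg)
      next
        case False
        then have n1: "n > 1" by simp
        define z where "z = (1/n) *\<^sub>R (y - 2 *\<^sub>R m)"
        have "norm z = \<bar>1/n\<bar> * n" unfolding z_def n_def by simp
        then have zS: "norm z = 1" using n1 by simp
        have zw: "z - w = (1/n) *\<^sub>R ((y - x) + (1 - n) *\<^sub>R w)"
          using n1 by (simp add: z_def ym algebra_simps)
        have "norm ((y - x) + (1 - n) *\<^sub>R w) \<le> \<delta> + (n - 1)"
          using norm_triangle_ineq[of "y - x" "(1 - n) *\<^sub>R w"] w n1 by (simp add: \<delta>_def)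
        also have "\<dots> \<le> 2 * \<delta>" using nup by simp
        finally have "norm (z - w) \<le> (1/n) * (2 * \<delta>)" using n1 by (simp add: zw divide_right_mono)
        also have "\<dots> \<le> 2 * \<delta>" using n1 \<delta> mult_left_mono[of 1 n \<delta>] by (simp add: field_simps)
        finally have dzw: "dist z w \<le> 2 * \<delta>" by (simp add: dist_norm)
        have "2 - dist y z \<le> e / 10 * (dist y x + dist z w)"
        proof -
          have yS': "y \<in> sphere 0 1" "z \<in> sphere 0 1" using y zS by auto
          have "dist y x < d0" using \<delta> unfolding dist_norm \<delta>_def by linarith
          moreover have "dist z w < d0" using dzw \<delta> by linarith
          ultimately show ?thesis using hd0 yS' by blast
        qed
        also have "\<dots> \<le> e / 10 * (3 * \<delta>)"
          using dzw e by (simp add: dist_norm \<delta>_def)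
        finally have A: "2 - dist y z \<le> e / 10 * (3 * \<delta>)" .
        have yz: "y - z = (1 - 1/n) *\<^sub>R y + (2/n) *\<^sub>R m"
          by (simp add: z_def algebra_simps)
        have "norm (y - z) \<le> \<bar>1 - 1/n\<bar> * norm y + \<bar>2/n\<bar> * norm m"
          unfolding yz by (metis norm_scaleR norm_triangle_ineq)
        also have "\<dots> = 1 + 1/n" using n1 y nm by simp
        finally have B: "dist y z \<le> 1 + 1/n" by (simp add: dist_norm)
        have "1 - 1/n \<le> e / 10 * (3 * \<delta>)" using A B by linarith
        then have "n - 1 \<le> n * (e / 10 * (3 * \<delta>))" using n1 by (simp add: field_simps)
        also have "\<dots> \<le> (3/2) * (e / 10 * (3 * \<delta>))"
          using nup \<delta> e by (intro mult_right_mono) auto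
        also have "\<dots> \<le> e * \<delta>" using e \<delta> by simp
        finally show ?thesis using fy by (simp add: \<delta>_def)
      qed
    qed
  qed
  have "(norm has_derivative f) (at x)"
    unfolding has_derivative_at_alt
  proof (intro conjI allI impI)
    show "bounded_linear f" by (rule bl)
    fix e :: real assume e: "e > 0"
    obtain d1 where d1: "d1 > 0" and hd1: "\<forall>y. norm y = 1 \<longrightarrow> norm (y - x) < d1 \<longrightarrow> 1 - f y \<le> e / 6 * norm (y - x)"
      using step1[of "e/6"] e by auto
    show "\<exists>d>0. \<forall>q. norm (q - x) < d \<longrightarrow> norm (norm q - norm x - f (q - x)) \<le> e * norm (q - x)"
    proof (intro exI[of _ "min (1/2) (d1/4)"] conjI allI impI)
      show "min (1/2) (d1/4) > 0" using d1 by simp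
      fix q :: 'a assume dq: "norm (q - x) < min (1/2) (d1/4)"
      define k where "k = q - x"
      define N where "N = norm q"
      have k: "norm k < 1/2" "norm k < d1/4" using dq by (auto simp: k_def)
      have qk: "q = x + k" by (simp add: k_def)
      have Nup: "N \<le> 1 + norm k" using norm_triangle_ineq[of x k] x by (simp add: N_def qk)
      have Nlo: "N \<ge> 1 - norm k" using norm_triangle_ineq4[of "x + k" k] x by (simp add: N_def qk)
      have Npos: "N > 0" using Nlo k by simp
      have lower: "N - 1 - f k \<ge> 0"
        using fb[of q] by (simp add: N_def qk f.add fx abs_le_iff)
      define y where "y = (1/N) *\<^sub>R q"
      have yS: "norm y = 1" using Npos by (simp add: y_def N_def)
      have yx: "y - x = (1/N) *\<^sub>R (k + (1 - N) *\<^sub>R x)"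
        using Npos by (simp add: y_def qk algebra_simps)
      have "norm (k + (1 - N) *\<^sub>R x) \<le> norm k + \<bar>1 - N\<bar>"
        using norm_triangle_ineq[of k "(1 - N) *\<^sub>R x"] x by simp
      also have "\<dots> \<le> 2 * norm k" using Nup Nlo by simp
      finally have "norm (y - x) \<le> (1/N) * (2 * norm k)" using Npos by (simp add: yx divide_right_mono)
      also have "\<dots> \<le> 2 * (2 * norm k)"
      proof (rule mult_right_mono)
        show "1/N \<le> 2" using Nlo k Npos by (simp add: field_simps)
      qed simp
      also have "\<dots> = 4 * norm k" by simp
      finally have nyx: "norm (y - x) \<le> 4 * norm k" .
      then have "norm (y - x) < d1" using k by simp
      then have "1 - f y \<le> e / 6 * norm (y - x)" using hd1 yS by blast
      also have "\<dots> \<le> e / 6 * (4 * norm k)" using nyx e by simp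
      finally have C: "1 - f y \<le> e / 6 * (4 * norm k)" .
      have fy: "f y = (1 + f k) / N" by (simp add: y_def qk f.add fx f.scaleR)
      have "N - 1 - f k = N * (1 - f y)" using Npos by (simp add: fy field_simps)
      also have "\<dots> \<le> N * (e / 6 * (4 * norm k))" using C Npos by simp
      also have "\<dots> \<le> (3/2) * (e / 6 * (4 * norm k))"
        using Nup k e by (intro mult_right_mono) auto
      also have "\<dots> = e * norm k" by simp
      finally have upper: "N - 1 - f k \<le> e * norm k" .
      show "norm (norm q - norm x - f (q - x)) \<le> e * norm (q - x)"
        using lower upper x by (simp add: N_def k_def[symmetric])
    qed
  qed
  then show ?thesis by (auto simp: differentiable_def)
qed

lemma diff_iff_crit:
  fixes x :: "'a::real_normed_vector"
  assumes "dim (UNIV :: 'a set) = 2" "norm x = 1"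
  shows "norm differentiable (at x) \<longleftrightarrow> crit x"
  using diff_imp_crit crit_imp_diff assms by blast

lemma crit_transfer:
  fixes \<tau> :: "'a::real_normed_vector \<Rightarrow> 'b::real_normed_vector"
  assumes isom: "\<forall>x\<in>sphere 0 1. \<forall>y\<in>sphere 0 1. dist (\<tau> x) (\<tau> y) = dist x y"
    and maps: "\<tau> ` sphere 0 1 = sphere 0 1"
    and x: "x \<in> sphere 0 1"
  shows "crit (\<tau> x) \<longleftrightarrow> crit x"
proof
  assume "crit (\<tau> x)"
  then obtain w' where w': "w' \<in> sphere 0 1" "dist (\<tau> x) w' = 2"
    and H: "\<And>e. e > 0 \<Longrightarrow> \<exists>d>0. \<forall>y\<in>sphere 0 1. \<forall>z\<in>sphere 0 1.
      dist y (\<tau> x) < d \<longrightarrow> dist z w' < d \<longrightarrow> 2 - dist y z \<le> e * (dist y (\<tau> x) + dist z w')"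
    unfolding crit_def by blast
  obtain w where w: "w \<in> sphere 0 1" "w' = \<tau> w" using w'(1) maps by blast
  show "crit x" unfolding crit_def
  proof (intro bexI[OF _ w(1)] conjI allI impI)
    show "dist x w = 2" using w'(2) w isom x by simp
    fix e :: real assume e: "e > 0"
    obtain d where d: "d > 0" and Hd: "\<forall>y\<in>sphere 0 1. \<forall>z\<in>sphere 0 1.
      dist y (\<tau> x) < d \<longrightarrow> dist z w' < d \<longrightarrow> 2 - dist y z \<le> e * (dist y (\<tau> x) + dist z w')"
      using H[OF e] by blast
    show "\<exists>d>0. \<forall>y\<in>sphere 0 1. \<forall>z\<in>sphere 0 1. dist y x < d \<longrightarrow> dist z w < d \<longrightarrow>
        2 - dist y z \<le> e * (dist y x + dist z w)"
    proof (intro exI[of _ d] conjI ballI impI)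
      show "d > 0" by (rule d)
      fix y z :: 'a assume y: "y \<in> sphere 0 1" and z: "z \<in> sphere 0 1"
        and dy: "dist y x < d" and dz: "dist z w < d"
      have ty: "\<tau> y \<in> sphere 0 1" "\<tau> z \<in> sphere 0 1" using y z maps by blast+
      have e1: "dist (\<tau> y) (\<tau> x) = dist y x" "dist (\<tau> z) (\<tau> w) = dist z w"
        "dist (\<tau> y) (\<tau> z) = dist y z"
        using isom x y z w(1) by auto
      show "2 - dist y z \<le> e * (dist y x + dist z w)"
        using Hd ty dy dz unfolding w(2) e1[symmetric] by blast
    qed
  qed
next
  assume "crit x"
  then obtain w where w: "w \<in> sphere 0 1" "dist x w = 2"
    and H: "\<And>e. e > 0 \<Longrightarrow> \<exists>d>0. \<forall>y\<in>sphere 0 1. \<forall>z\<in>sphere 0 1.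
      dist y x < d \<longrightarrow> dist z w < d \<longrightarrow> 2 - dist y z \<le> e * (dist y x + dist z w)"
    unfolding crit_def by blast
  have tw: "\<tau> w \<in> sphere 0 1" using w(1) maps by blast
  show "crit (\<tau> x)" unfolding crit_def
  proof (intro bexI[OF _ tw] conjI allI impI)
    show "dist (\<tau> x) (\<tau> w) = 2" using w isom x by simp
    fix e :: real assume e: "e > 0"
    obtain d where d: "d > 0" and Hd: "\<forall>y\<in>sphere 0 1. \<forall>z\<in>sphere 0 1.
      dist y x < d \<longrightarrow> dist z w < d \<longrightarrow> 2 - dist y z \<le> e * (dist y x + dist z w)"
      using H[OF e] by blast
    show "\<exists>d>0. \<forall>y\<in>sphere 0 1. \<forall>z\<in>sphere 0 1. dist y (\<tau> x) < d \<longrightarrow> dist z (\<tau> w) < d \<longrightarrow>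
        2 - dist y z \<le> e * (dist y (\<tau> x) + dist z (\<tau> w))"
    proof (intro exI[of _ d] conjI ballI impI)
      show "d > 0" by (rule d)
      fix y' z' :: 'b assume y': "y' \<in> sphere 0 1" and z': "z' \<in> sphere 0 1"
        and dy: "dist y' (\<tau> x) < d" and dz: "dist z' (\<tau> w) < d"
      obtain y where y: "y \<in> sphere 0 1" "y' = \<tau> y" using y' maps by blast
      obtain z where z: "z \<in> sphere 0 1" "z' = \<tau> z" using z' maps by blast
      have e1: "dist (\<tau> y) (\<tau> x) = dist y x" "dist (\<tau> z) (\<tau> w) = dist z w"
        "dist (\<tau> y) (\<tau> z) = dist y z"
        using isom x y(1) z(1) w(1) by auto
      show "2 - dist y' z' \<le> e * (dist y' (\<tau> x) + dist z' (\<tau> w))"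
        using Hd y(1) z(1) dy dz unfolding y(2) z(2) e1 by blast
    qed
  qed
qed

theorem corollary2:
  fixes \<tau> :: "'a::real_normed_vector \<Rightarrow> 'b::real_normed_vector"
  assumes dimX: "dim (UNIV :: 'a set) = 2"
    and dimY: "dim (UNIV :: 'b set) = 2"
    and isom: "\<forall>x\<in>sphere 0 1. \<forall>y\<in>sphere 0 1. dist (\<tau> x) (\<tau> y) = dist x y"
    and maps: "\<tau> ` sphere 0 1 = sphere 0 1"
  shows "(piecewise_C1_sphere TYPE('a) \<longleftrightarrow> piecewise_C1_sphere TYPE('b))
       \<and> (piecewise_C1_sphere TYPE('a) \<longrightarrow>
           (\<forall>x\<in>sphere 0 1. ((norm :: 'a \<Rightarrow> real) differentiable (at x))
               \<longleftrightarrow> ((norm :: 'b \<Rightarrow> real) differentiable (at (\<tau> x)))))"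
proof -
  have pt: "((norm :: 'a \<Rightarrow> real) differentiable (at x))
               \<longleftrightarrow> ((norm :: 'b \<Rightarrow> real) differentiable (at (\<tau> x)))" if x: "x \<in> sphere 0 1" for x
  proof -
    have tx: "\<tau> x \<in> sphere 0 1" using x maps by blast
    have "((norm :: 'a \<Rightarrow> real) differentiable (at x)) \<longleftrightarrow> crit x"
      using diff_iff_crit[OF dimX] x by simp
    also have "\<dots> \<longleftrightarrow> crit (\<tau> x)" using crit_transfer[OF isom maps x] by simp
    also have "\<dots> \<longleftrightarrow> ((norm :: 'b \<Rightarrow> real) differentiable (at (\<tau> x)))"
      using diff_iff_crit[OF dimY] tx by simp
    finally show ?thesis .
  qed
  have inj: "inj_on \<tau> (sphere 0 1)"
  proof (rule inj_onI)
    fix x y :: 'a assume "x \<in> sphere 0 1" "y \<in> sphere 0 1" "\<tau> x = \<tau> y"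
    then have "dist x y = 0" using isom by (metis dist_self)
    then show "x = y" by simp
  qed
  define A where "A = {x \<in> sphere (0::'a) 1. \<not> ((norm :: 'a \<Rightarrow> real) differentiable (at x))}"
  define B where "B = {x \<in> sphere (0::'b) 1. \<not> ((norm :: 'b \<Rightarrow> real) differentiable (at x))}"
  have AB: "B = \<tau> ` A"
  proof
    show "B \<subseteq> \<tau> ` A"
    proof
      fix y assume "y \<in> B"
      then have y: "y \<in> sphere 0 1" "\<not> ((norm :: 'b \<Rightarrow> real) differentiable (at y))" by (auto simp: B_def)
      obtain x where x: "x \<in> sphere 0 1" "y = \<tau> x" using y(1) maps by blast
      then have "x \<in> A" using pt[OF x(1)] y(2) by (simp add: A_def)
      then show "y \<in> \<tau> ` A" using x(2) by blast
    qed
  next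
    show "\<tau> ` A \<subseteq> B"
    proof
      fix y assume "y \<in> \<tau> ` A"
      then obtain x where x: "x \<in> A" "y = \<tau> x" by blast
      then have "x \<in> sphere 0 1" "\<not> ((norm :: 'a \<Rightarrow> real) differentiable (at x))" by (auto simp: A_def)
      then show "y \<in> B" using pt x(2) maps by (auto simp: B_def)
    qed
  qed
  have "inj_on \<tau> A" using inj by (rule inj_on_subset) (auto simp: A_def)
  then have "finite A \<longleftrightarrow> finite B" unfolding AB by (simp add: finite_image_iff)
  then have "piecewise_C1_sphere TYPE('a) \<longleftrightarrow> piecewise_C1_sphere TYPE('b)"
    by (simp add: piecewise_C1_sphere_def A_def B_def)
  then show ?thesis using pt by blast
qed

end
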